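(* Let $\mathfrak{X}$ be a connected complex analytic manifold with base point $z^*$, universal covering $\widetilde{\mathfrak{X}}$, and $\pi=\pi_1(\mathfrak{X},z^* )$. Then the spaces $\widehat{\mathcal{F}}^q_k$ of the $\hat\pi$-unipotent filtration are invariant under all monodromy operators $M_\gamma$, $\gamma\in\pi$.
   Context: $\pi$ acts on $\widetilde{\mathfrak{X}}$ by deck transformations $T_\gamma$; for a holomorphic $q$-form $\theta$ on $\widetilde{\mathfrak{X}}$, $M_\gamma\theta=T_\gamma^*\theta$ and $\mathrm{Var}_\gamma\theta=M_\gamma\theta-\theta$. $\hat\pi\subset\pi$ is the kernel of the natural epimorphism $\pi\to H_1(\mathfrak{X};\mathbb{Z}_2)$. The $\hat\pi$-unipotent filtration on the space $\mathcal{A}^q(\widetilde{\mathfrak{X}})$ of holomorphic $q$-forms on $\widetilde{\mathfrak{X}}$ is $\widehat{\mathcal{F}}^q_{-1}=\{0\}$ and $\widehat{\mathcal{F}}^q_k=\{\theta:\mathrm{Var}_\gamma\theta\in\widehat{\mathcal{F}}^q_{k-1}\text{ for all }\gamma\in\hat\pi\}$ for $k\ge0$. *)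

theory Defs
  imports "HOL-Analysis.Analysis" "HOL-Algebra.Algebra"
begin

text \<open>Subgroup of the fundamental group generated by all squares; the quotient
  by it is the mod-2 abelianization, i.e. H_1(X; Z_2) (Hurewicz).\<close>
definition sq_subgroup :: "('g, 'b) monoid_scheme \<Rightarrow> 'g set" where
  "sq_subgroup G = generate G {x \<otimes>\<^bsub>G\<^esub> x | x. x \<in> carrier G}"

definition hat_pi :: "('g, 'b) monoid_scheme \<Rightarrow> 'g set" where
  "hat_pi G = kernel G (G Mod sq_subgroup G) (\<lambda>x. sq_subgroup G #>\<^bsub>G\<^esub> x)"

text \<open>Monodromy operator M_gamma = pullback by the deck transformation T_gamma.\<close>
definition Mon :: "(('x \<Rightarrow> 'x) \<Rightarrow> 'v \<Rightarrow> 'v) \<Rightarrow> ('g \<Rightarrow> 'x \<Rightarrow> 'x) \<Rightarrow> 'g \<Rightarrow> 'v \<Rightarrow> 'v" where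
  "Mon pb T \<gamma> = pb (T \<gamma>)"

definition Var :: "(('x \<Rightarrow> 'x) \<Rightarrow> 'v \<Rightarrow> 'v) \<Rightarrow> ('g \<Rightarrow> 'x \<Rightarrow> 'x) \<Rightarrow> 'g \<Rightarrow> 'v \<Rightarrow> 'v::real_vector" where
  "Var pb T \<gamma> \<theta> = Mon pb T \<gamma> \<theta> - \<theta>"

text \<open>filt_aux n = F_{n-1}; filt_aux 0 = F_{-1} = {0}.\<close>
fun filt_aux :: "('g, 'b) monoid_scheme \<Rightarrow> ('g \<Rightarrow> 'x \<Rightarrow> 'x) \<Rightarrow> (('x \<Rightarrow> 'x) \<Rightarrow> 'v \<Rightarrow> 'v)
    \<Rightarrow> 'v::real_vector set \<Rightarrow> nat \<Rightarrow> 'v set" where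
  "filt_aux G T pb A 0 = {0}"
| "filt_aux G T pb A (Suc n) =
     {\<theta> \<in> A. \<forall>\<gamma> \<in> hat_pi G. Var pb T \<gamma> \<theta> \<in> filt_aux G T pb A n}"

definition unip_filt :: "('g, 'b) monoid_scheme \<Rightarrow> ('g \<Rightarrow> 'x \<Rightarrow> 'x) \<Rightarrow> (('x \<Rightarrow> 'x) \<Rightarrow> 'v \<Rightarrow> 'v)
    \<Rightarrow> 'v::real_vector set \<Rightarrow> nat \<Rightarrow> 'v set" where
  "unip_filt G T pb A k = filt_aux G T pb A (Suc k)"

end

theory Submission
  imports Defs
begin

lemma (in group) inv_cancel_left': "x \<in> carrier G \<Longrightarrow> y \<in> carrier G \<Longrightarrow> inv x \<otimes> (x \<otimes> y) = y"
  by (simp add: m_assoc[symmetric])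

lemma (in group) inv_cancel_left'': "x \<in> carrier G \<Longrightarrow> y \<in> carrier G \<Longrightarrow> x \<otimes> (inv x \<otimes> y) = y"
  by (simp add: m_assoc[symmetric])

lemma sq_conj:
  fixes G (structure)
  assumes grp: "group G" and h: "h \<in> sq_subgroup G" and g: "g \<in> carrier G"
  shows "g \<otimes>\<^bsub>G\<^esub> h \<otimes>\<^bsub>G\<^esub> inv\<^bsub>G\<^esub> g \<in> sq_subgroup G"
proof -
  interpret group G by (rule grp)
  let ?S = "{x \<otimes> x | x. x \<in> carrier G}"
  have S: "?S \<subseteq> carrier G" by auto
  have "h \<in> generate G ?S" using h by (simp add: sq_subgroup_def)
  then have "g \<otimes> h \<otimes> inv g \<in> generate G ?S"
  proof (induct h rule: generate.induct)
    case one then show ?case using g by (simp add: generate.one)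
  next
    case (incl h)
    then obtain x where x: "x \<in> carrier G" "h = x \<otimes> x" by auto
    have "g \<otimes> h \<otimes> inv g = (g \<otimes> x \<otimes> inv g) \<otimes> (g \<otimes> x \<otimes> inv g)"
      using x g by (simp add: m_assoc inv_cancel_left' inv_cancel_left'')
    then show ?case using x g by (auto intro!: generate.incl)
  next
    case (inv h)
    then obtain x where x: "x \<in> carrier G" "h = x \<otimes> x" by auto
    have "g \<otimes> inv h \<otimes> inv g = inv ((g \<otimes> x \<otimes> inv g) \<otimes> (g \<otimes> x \<otimes> inv g))"
      using x g by (simp add: m_assoc inv_mult_group inv_cancel_left' inv_cancel_left'')
    then show ?case using x g by (auto intro!: generate.inv)
  next
    case (eng h1 h2)
    have c1: "h1 \<in> carrier G" "h2 \<in> carrier G"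
      using eng(1,3) generate_in_carrier[OF S] by auto
    have "g \<otimes> (h1 \<otimes> h2) \<otimes> inv g = (g \<otimes> h1 \<otimes> inv g) \<otimes> (g \<otimes> h2 \<otimes> inv g)"
      using c1 g by (simp add: m_assoc inv_cancel_left' inv_cancel_left'')
    then show ?case using eng by (auto intro: generate.eng)
  qed
  then show ?thesis by (simp add: sq_subgroup_def)
qed

lemma hat_pi_conj:
  fixes G (structure)
  assumes grp: "group G" and d: "d \<in> hat_pi G" and g: "g \<in> carrier G"
  shows "g \<otimes>\<^bsub>G\<^esub> d \<otimes>\<^bsub>G\<^esub> inv\<^bsub>G\<^esub> g \<in> hat_pi G"
proof -
  interpret group G by (rule grp)
  let ?H = "sq_subgroup G"
  have sub: "subgroup ?H G" unfolding sq_subgroup_def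
    by (rule generate_is_subgroup) auto
  have dc: "d \<in> carrier G" and dH: "?H #> d = ?H"
    using d by (auto simp: hat_pi_def kernel_def FactGroup_def)
  have "d \<in> ?H #> d"
    using dc subgroup.one_closed[OF sub] by (force simp: r_coset_def)
  then have "d \<in> ?H" using dH by simp
  then have "g \<otimes> d \<otimes> inv g \<in> ?H" by (rule sq_conj[OF grp _ g])
  then have "?H #> (g \<otimes> d \<otimes> inv g) = ?H" by (rule subgroup.rcos_const[OF sub grp])
  then show ?thesis using dc g by (simp add: hat_pi_def kernel_def FactGroup_def)
qed

theorem lemma2:
  fixes G :: "('g, 'b) monoid_scheme"
    and T :: "'g \<Rightarrow> 'x \<Rightarrow> 'x"
    and pb :: "('x \<Rightarrow> 'x) \<Rightarrow> 'v::real_vector \<Rightarrow> 'v"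
    and A :: "'v set"
  assumes deck_action: "group_action G UNIV T"
    and pb_comp: "\<And>f g. pb (f \<circ> g) = pb g \<circ> pb f"
    and pb_id: "pb id = id"
    and pb_linear: "\<And>f. linear (pb f)"
    and A_subspace: "subspace A"
    and A_invariant: "\<And>\<gamma>. \<gamma> \<in> carrier G \<Longrightarrow> pb (T \<gamma>) ` A \<subseteq> A"
  shows "\<forall>k. \<forall>\<gamma> \<in> carrier G. Mon pb T \<gamma> ` unip_filt G T pb A k \<subseteq> unip_filt G T pb A k"
proof -
  have grp: "group G" using deck_action
    unfolding group_action_def group_hom_def group_hom_axioms_def by auto
  interpret group G by (rule grp)
  have Tmul: "T (g \<otimes>\<^bsub>G\<^esub> h) = T g \<circ> T h" if "g \<in> carrier G" "h \<in> carrier G" for g h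
    using group_action.composition_rule[OF deck_action _ that] by auto
  have hc: "d \<in> carrier G" if "d \<in> hat_pi G" for d
    using that by (simp add: hat_pi_def kernel_def)
  have main: "\<forall>\<gamma> \<in> carrier G. \<forall>\<theta> \<in> filt_aux G T pb A n. Mon pb T \<gamma> \<theta> \<in> filt_aux G T pb A n" for n
  proof (induct n)
    case 0 then show ?case by (simp add: Mon_def linear_0[OF pb_linear])
  next
    case (Suc n)
    show ?case
    proof (intro ballI)
      fix \<gamma> \<theta> assume g: "\<gamma> \<in> carrier G" and th: "\<theta> \<in> filt_aux G T pb A (Suc n)"
      have thA: "\<theta> \<in> A" using th by simp
      have "Mon pb T \<gamma> \<theta> \<in> A" using A_invariant[OF g] thA by (auto simp: Mon_def)
      moreover have "Var pb T \<delta> (Mon pb T \<gamma> \<theta>) \<in> filt_aux G T pb A n" if d: "\<delta> \<in> hat_pi G" for \<delta>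
      proof -
        let ?d' = "\<gamma> \<otimes>\<^bsub>G\<^esub> \<delta> \<otimes>\<^bsub>G\<^esub> inv\<^bsub>G\<^esub> \<gamma>"
        have d': "?d' \<in> hat_pi G" by (rule hat_pi_conj[OF grp d g])
        have dc: "\<delta> \<in> carrier G" by (rule hc[OF d])
        have eq: "?d' \<otimes>\<^bsub>G\<^esub> \<gamma> = \<gamma> \<otimes>\<^bsub>G\<^esub> \<delta>" using dc g by (simp add: m_assoc inv_cancel_left' inv_cancel_left'')
        have "pb (T \<delta>) (pb (T \<gamma>) \<theta>) = pb (T \<gamma> \<circ> T \<delta>) \<theta>" by (simp add: pb_comp)
        also have "\<dots> = pb (T (\<gamma> \<otimes>\<^bsub>G\<^esub> \<delta>)) \<theta>" using Tmul g dc by simp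
        also have "\<dots> = pb (T (?d' \<otimes>\<^bsub>G\<^esub> \<gamma>)) \<theta>" by (simp add: eq)
        also have "\<dots> = pb (T ?d' \<circ> T \<gamma>) \<theta>" using Tmul g dc by simp
        also have "\<dots> = pb (T \<gamma>) (pb (T ?d') \<theta>)" by (simp add: pb_comp)
        finally have e: "Var pb T \<delta> (Mon pb T \<gamma> \<theta>) = Mon pb T \<gamma> (Var pb T ?d' \<theta>)"
          by (simp add: Var_def Mon_def linear_diff[OF pb_linear])
        have "Var pb T ?d' \<theta> \<in> filt_aux G T pb A n" using th d' by simp
        then show ?thesis using Suc g e by simp
      qed
      ultimately show "Mon pb T \<gamma> \<theta> \<in> filt_aux G T pb A (Suc n)" by simp
    qed
  qed
  show ?thesis unfolding unip_filt_def using main by blast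
qed

end
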